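(* Let $r:[0,1]^2\to\mathbb{R}$ be a covariance kernel admitting a Mercer decomposition $r(s,t)=\sum_{j=1}^{q}\lambda_j\phi_j(s)\phi_j(t)$ with finite rank $q$, eigenvalues $\lambda_j>0$, and orthonormal eigenfunctions $\phi_1,\dots,\phi_q$ that are real analytic on $(0,1)$. Let $\delta\in(0,1)$ and let $K$ be an integer with $K>\delta^{-1}(2q+1)$. Then for Lebesgue-almost every grid $(t_1,\dots,t_K)\in\mathcal{T}_K$, the matrix $R^K=\{r(t_j,t_l)\}_{j,l=1}^K$ is the unique solution of $$\min_{\theta\in\mathbb{R}^{K\times K}}\mathrm{rank}(\theta)\quad\text{subject to}\quad \|P^K_\delta\circ(R^K-\theta)\|_F^2=0.$$ Equivalently, for almost every grid in $\mathcal{T}_K$ and all $\tau>0$ sufficiently small, $$R^K=\arg\min_{\theta\in\mathbb{R}^{K\times K}}\Big\{K^{-2}\|P^K_\delta\circ(R^K-\theta)\|_F^2+\tau\,\mathrm{rank}(\theta)\Big\}.$$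
   Context: For an integer $K\ge1$, $\{I_{j,K}\}_{j=1}^K$ denotes the partition of $[0,1]$ into consecutive intervals of length $1/K$, and $\mathcal{T}_K=\{(x_1,\dots,x_K)\in\mathbb{R}^K: x_j\in I_{j,K},\ j=1,\dots,K\}$ is the set of grids (perturbations of the regular grid). $P^K_\delta\in\mathbb{R}^{K\times K}$ is the band mask $P^K_\delta(j,l)=1\{|j-l|<\lfloor K\delta\rfloor-1\}$, $\circ$ denotes the entrywise (Hadamard) product, and $\|\cdot\|_F$ the Frobenius norm. *)

theory Defs
  imports "HOL-Analysis.Analysis" "Jordan_Normal_Form.DL_Rank"
begin

definition real_analytic_at :: "(real \<Rightarrow> real) \<Rightarrow> real \<Rightarrow> bool" where
  "real_analytic_at f x \<longleftrightarrow>
     (\<exists>a :: nat \<Rightarrow> real. \<exists>e > 0. \<forall>y. \<bar>y - x\<bar> < e \<longrightarrow> (\<lambda>n. a n * (y - x) ^ n) sums f y)"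

text \<open>Grids: t j lies in the (j+1)-th interval I_{j+1,K} = [j/K, (j+1)/K], indices j = 0..K-1.\<close>
definition grid_set :: "nat \<Rightarrow> (nat \<Rightarrow> real) set" where
  "grid_set K = {t. \<forall>j<K. t j \<in> {real j / real K .. (real j + 1) / real K}}"

text \<open>Band mask P^K_delta (0-based indices; only differences matter).\<close>
definition band_mask :: "nat \<Rightarrow> real \<Rightarrow> nat \<Rightarrow> nat \<Rightarrow> real" where
  "band_mask K \<delta> j l = (if \<bar>int j - int l\<bar> < \<lfloor>real K * \<delta>\<rfloor> - 1 then 1 else 0)"

definition kernel_mat :: "(real \<Rightarrow> real \<Rightarrow> real) \<Rightarrow> nat \<Rightarrow> (nat \<Rightarrow> real) \<Rightarrow> real mat" where
  "kernel_mat r K t = mat K K (\<lambda>(j, l). r (t j) (t l))"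

definition masked_frob_sq :: "nat \<Rightarrow> real \<Rightarrow> real mat \<Rightarrow> real mat \<Rightarrow> real" where
  "masked_frob_sq K \<delta> A B =
     (\<Sum>j<K. \<Sum>l<K. (band_mask K \<delta> j l * (A $$ (j, l) - B $$ (j, l)))\<^sup>2)"

definition mrank :: "nat \<Rightarrow> real mat \<Rightarrow> nat" where
  "mrank K A = vec_space.rank K A"

end

theory Submission
  imports Defs "Jordan_Normal_Form.DL_Rank_Submatrix"
begin


lemma ra_add:
  assumes "real_analytic_at f x" "real_analytic_at g x"
  shows "real_analytic_at (\<lambda>y. f y + g y) x"
proof -
  obtain a e where e: "e>0" and a: "\<And>y. \<bar>y-x\<bar> < e \<Longrightarrow> (\<lambda>n. a n * (y-x)^n) sums f y"
    using assms(1) unfolding real_analytic_at_def by blast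
  obtain b d where d: "d>0" and b: "\<And>y. \<bar>y-x\<bar> < d \<Longrightarrow> (\<lambda>n. b n * (y-x)^n) sums g y"
    using assms(2) unfolding real_analytic_at_def by blast
  show ?thesis unfolding real_analytic_at_def
  proof (intro exI[of _ "\<lambda>n. a n + b n"] exI[of _ "min e d"] conjI allI impI)
    show "min e d > 0" using e d by simp
    fix y assume "\<bar>y-x\<bar> < min e d"
    then have "(\<lambda>n. a n * (y-x)^n + b n * (y-x)^n) sums (f y + g y)"
      using a b by (intro sums_add) auto
    then show "(\<lambda>n. (a n + b n) * (y-x)^n) sums (f y + g y)" by (simp add: distrib_right)
  qed
qed

lemma ra_cmult:
  assumes "real_analytic_at f x"
  shows "real_analytic_at (\<lambda>y. c * f y) x"
proof -
  obtain a e where e: "e>0" and a: "\<And>y. \<bar>y-x\<bar> < e \<Longrightarrow> (\<lambda>n. a n * (y-x)^n) sums f y"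
    using assms(1) unfolding real_analytic_at_def by blast
  show ?thesis unfolding real_analytic_at_def
  proof (intro exI[of _ "\<lambda>n. c * a n"] exI[of _ e] conjI allI impI)
    show "e > 0" using e by simp
    fix y assume "\<bar>y-x\<bar> < e"
    then have "(\<lambda>n. c * (a n * (y-x)^n)) sums (c * f y)"
      using a by (intro sums_mult) auto
    then show "(\<lambda>n. c * a n * (y-x)^n) sums (c * f y)" by (simp add: mult.assoc)
  qed
qed

lemma ra_zero: "real_analytic_at (\<lambda>y. 0) x"
  unfolding real_analytic_at_def
  by (rule exI[of _ "\<lambda>n. 0"], rule exI[of _ 1]) simp

lemma ra_sum:
  assumes "finite S" "\<And>k. k \<in> S \<Longrightarrow> real_analytic_at (f k) x"
  shows "real_analytic_at (\<lambda>y. \<Sum>k\<in>S. f k y) x"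
  using assms
proof (induction S rule: finite_induct)
  case empty
  then show ?case using ra_zero by simp
next
  case (insert k S)
  then show ?case using ra_add[of "f k" x "\<lambda>y. \<Sum>k\<in>S. f k y"] by simp
qed

lemma ra_local:
  assumes "real_analytic_at f x"
  shows "(\<exists>e>0. \<forall>y. \<bar>y-x\<bar> < e \<longrightarrow> f y = 0) \<or>
         (\<exists>e>0. \<forall>y. 0 < \<bar>y-x\<bar> \<and> \<bar>y-x\<bar> < e \<longrightarrow> f y \<noteq> 0)"
proof -
  obtain a e where e: "e>0" and a: "\<And>y. \<bar>y-x\<bar> < e \<Longrightarrow> (\<lambda>n. a n * (y-x)^n) sums f y"
    using assms(1) unfolding real_analytic_at_def by blast
  show ?thesis
  proof (cases "\<forall>n. a n = 0")
    case True
    have "\<forall>y. \<bar>y-x\<bar> < e \<longrightarrow> f y = 0"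
    proof (intro allI impI)
      fix y assume "\<bar>y-x\<bar> < e"
      then have "(\<lambda>n. 0::real) sums f y" using a[of y] True by simp
      then show "f y = 0" using sums_0[of "\<lambda>n. 0::real"] sums_unique2 by blast
    qed
    then show ?thesis using e by blast
  next
    case False
    define n0 where "n0 = (LEAST n. a n \<noteq> 0)"
    have an0: "a n0 \<noteq> 0" using False LeastI_ex[of "\<lambda>n. a n \<noteq> 0"] n0_def by blast
    have below: "\<And>i. i < n0 \<Longrightarrow> a i = 0" using not_less_Least n0_def by blast
    define g where "g h = (\<Sum>n. a (n + n0) * h ^ n)" for h
    have gs: "(\<lambda>n. a (n+n0) * h^n) sums (f (x+h) / h^n0)" if "\<bar>h\<bar> < e" "h \<noteq> 0" for h
    proof -
      have "(\<lambda>n. a n * h^n) sums f (x+h)" using a[of "x+h"] that by simp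
      then have "(\<lambda>n. a (n+n0) * h^(n+n0)) sums f (x+h)"
        using sums_zero_iff_shift[of n0 "\<lambda>n. a n * h^n"] below by simp
      then have "(\<lambda>n. (a (n+n0) * h^(n+n0)) / h^n0) sums (f (x+h) / h^n0)" by (rule sums_divide)
      then show ?thesis using that by (simp add: power_add)
    qed
    have summ: "summable (\<lambda>n. a (n+n0) * (e/2)^n)" using gs[of "e/2"] e by (auto simp: sums_iff)
    have cont: "isCont g 0" unfolding g_def by (rule isCont_powser[OF summ]) (use e in simp)
    have g0: "g 0 = a n0" unfolding g_def by simp
    have "\<forall>\<^sub>F h in at 0. g h \<noteq> 0"
      using tendsto_imp_eventually_ne[of g "g 0" "at 0" 0] cont an0 g0
      by (simp add: isCont_def)
    then obtain d where d: "d > 0" "\<And>h. h \<noteq> 0 \<Longrightarrow> dist h 0 < d \<Longrightarrow> g h \<noteq> 0"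
      unfolding eventually_at by auto
    have "\<forall>y. 0 < \<bar>y-x\<bar> \<and> \<bar>y-x\<bar> < min e d \<longrightarrow> f y \<noteq> 0"
    proof (intro allI impI)
      fix y assume y: "0 < \<bar>y-x\<bar> \<and> \<bar>y-x\<bar> < min e d"
      define h where "h = y - x"
      have h: "h \<noteq> 0" "\<bar>h\<bar> < e" "\<bar>h\<bar> < d" using y h_def by auto
      have "g h = f (x+h) / h^n0" using gs[OF h(2,1)] unfolding g_def by (simp add: sums_iff)
      moreover have "g h \<noteq> 0" using d(2)[of h] h by simp
      ultimately show "f y \<noteq> 0" using h_def by auto
    qed
    then show ?thesis using e d by (intro disjI2) (rule exI[of _ "min e d"], simp)
  qed
qed

lemma ra_zeros_countable:
  assumes ana: "\<forall>x\<in>{0<..<1}. real_analytic_at f x"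
    and nz: "\<exists>x\<in>{0<..<1::real}. f x \<noteq> 0"
  shows "countable {x\<in>{0..1::real}. f x = 0}"
proof -
  define U where "U = {0<..<1::real}"
  define A where "A = {x\<in>U. \<exists>e>0. \<forall>y. \<bar>y-x\<bar> < e \<longrightarrow> f y = 0}"
  define B where "B = U - A"
  have openA: "open A"
    unfolding open_contains_ball
  proof
    fix x assume "x \<in> A"
    then obtain e where x: "x \<in> U" "e > 0" "\<forall>y. \<bar>y-x\<bar> < e \<longrightarrow> f y = 0" unfolding A_def by blast
    define e' where "e' = min (e/2) (min x (1-x))"
    have "e' > 0" using x unfolding e'_def U_def by auto
    moreover have "ball x e' \<subseteq> A"
    proof
      fix y assume "y \<in> ball x e'"
      then have y: "\<bar>y - x\<bar> < e'" by (simp add: dist_real_def abs_minus_commute)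
      have "y \<in> U" using y unfolding e'_def U_def by auto
      moreover have "\<forall>z. \<bar>z-y\<bar> < e/2 \<longrightarrow> f z = 0"
      proof (intro allI impI)
        fix z assume "\<bar>z-y\<bar> < e/2"
        moreover have "\<bar>y-x\<bar> < e/2" using y unfolding e'_def by auto
        ultimately have "\<bar>z-x\<bar> < e" by linarith
        then show "f z = 0" using x(3) by blast
      qed
      ultimately show "y \<in> A" unfolding A_def using x(2) by (intro CollectI conjI) (auto intro!: exI[of _ "e/2"])
    qed
    ultimately show "\<exists>e>0. ball x e \<subseteq> A" by blast
  qed
  have openB: "open B"
    unfolding open_contains_ball
  proof
    fix x assume "x \<in> B"
    then have xU: "x \<in> U" and xA: "x \<notin> A" unfolding B_def by auto
    have "real_analytic_at f x" using ana xU unfolding U_def by blast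
    from ra_local[OF this] xA xU
    obtain e where e: "e > 0" "\<forall>y. 0 < \<bar>y-x\<bar> \<and> \<bar>y-x\<bar> < e \<longrightarrow> f y \<noteq> 0"
      unfolding A_def by blast
    define e' where "e' = min e (min x (1-x))"
    have "e' > 0" using e xU unfolding e'_def U_def by auto
    moreover have "ball x e' \<subseteq> B"
    proof
      fix y assume "y \<in> ball x e'"
      then have y: "\<bar>y - x\<bar> < e'" by (simp add: dist_real_def abs_minus_commute)
      have yU: "y \<in> U" using y unfolding e'_def U_def by auto
      show "y \<in> B"
      proof (cases "y = x")
        case True then show ?thesis using xU xA B_def by simp
      next
        case False
        then have "f y \<noteq> 0" using e y unfolding e'_def by auto
        then have "y \<notin> A" unfolding A_def by force
        then show ?thesis using yU B_def by simp
      qed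
    qed
    ultimately show "\<exists>e>0. ball x e \<subseteq> B" by blast
  qed
  have "connected U" unfolding U_def by simp
  from connectedD[OF this openA openB] have "A \<inter> U = {} \<or> B \<inter> U = {}"
    unfolding B_def A_def by blast
  moreover have "B \<inter> U \<noteq> {}"
  proof
    assume "B \<inter> U = {}"
    then have "U \<subseteq> A" unfolding B_def by blast
    then have "\<forall>x\<in>U. f x = 0" unfolding A_def by force
    then show False using nz U_def by blast
  qed
  ultimately have A0: "A \<inter> U = {}" by blast
  define Z where "Z = {x. f x = 0}"
  have "\<forall>y\<in>U. \<not> y islimpt Z"
  proof
    fix y assume yU: "y \<in> U"
    have "real_analytic_at f y" using ana yU unfolding U_def by blast
    from ra_local[OF this] A0 yU
    obtain e where e: "e > 0" "\<forall>z. 0 < \<bar>z-y\<bar> \<and> \<bar>z-y\<bar> < e \<longrightarrow> f z \<noteq> 0"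
      unfolding A_def by blast
    show "\<not> y islimpt Z"
      unfolding islimpt_approachable
    proof
      assume "\<forall>e>0. \<exists>x'\<in>Z. x' \<noteq> y \<and> dist x' y < e"
      then obtain z where "z \<in> Z" "z \<noteq> y" "dist z y < e" using e(1) by blast
      then show False using e(2) unfolding Z_def dist_real_def by auto
    qed
  qed
  then have "Z sparse_in U" using sparse_in_open[of U Z] U_def by simp
  then have "countable (U \<inter> Z)" by (intro sparse_imp_countable) (auto simp: U_def)
  then have "countable ((U \<inter> Z) \<union> {0,1})" by simp
  moreover have "{x\<in>{0..1::real}. f x = 0} \<subseteq> (U \<inter> Z) \<union> {0,1}" unfolding U_def Z_def by auto
  ultimately show ?thesis using countable_subset by blast
qed

lemma lincomb_nonzero:
  fixes \<phi> :: "nat \<Rightarrow> real \<Rightarrow> real"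
  assumes orth: "\<forall>i<q. \<forall>j<q. ((\<lambda>t. \<phi> i t * \<phi> j t) has_integral (if i = j then 1 else 0)) {0..1}"
    and m: "m < q" and cm: "c m \<noteq> 0"
  shows "\<exists>x\<in>{0<..<1}. (\<Sum>k\<le>m. c k * \<phi> k x) \<noteq> 0"
proof (rule ccontr)
  assume "\<not> ?thesis"
  then have z: "\<forall>x\<in>{0<..<1}. (\<Sum>k\<le>m. c k * \<phi> k x) = 0" by auto
  have "((\<lambda>t. \<Sum>k\<le>m. c k * (\<phi> k t * \<phi> m t)) has_integral (\<Sum>k\<le>m. c k * (if k = m then 1 else 0))) {0..1}"
    using orth m by (intro has_integral_sum has_integral_mult_right) auto
  moreover have "(\<Sum>k\<le>m. c k * (if k = m then 1 else 0)) = c m" by (simp add: if_distrib cong: if_cong)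
  moreover have "((\<lambda>t. \<Sum>k\<le>m. c k * (\<phi> k t * \<phi> m t)) has_integral 0) {0..1}"
  proof (rule has_integral_spike_finite[where S="{0,1}" and f="\<lambda>t. 0"])
    fix x assume "x \<in> {0..1::real} - {0,1}"
    then have "(\<Sum>k\<le>m. c k * \<phi> k x) = 0" using z by auto
    then have "(\<Sum>k\<le>m. c k * \<phi> k x) * \<phi> m x = 0" by simp
    then show "(\<Sum>k\<le>m. c k * (\<phi> k x * \<phi> m x)) = 0"
      by (simp add: sum_distrib_right mult.assoc)
  qed auto
  ultimately have "c m = 0" using has_integral_unique by metis
  then show False using cm by simp
qed



definition blk :: "real mat \<Rightarrow> nat \<Rightarrow> nat \<Rightarrow> nat \<Rightarrow> real mat" where
  "blk A a b n = mat n n (\<lambda>(x,y). A $$ (a+x, b+y))"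

lemma blk_carrier[simp]: "blk A a b n \<in> carrier_mat n n"
  unfolding blk_def by simp

lemma blk_index[simp]: "x < n \<Longrightarrow> y < n \<Longrightarrow> blk A a b n $$ (x,y) = A $$ (a+x, b+y)"
  unfolding blk_def by simp

lemma blk_dim[simp]: "dim_row (blk A a b n) = n" "dim_col (blk A a b n) = n"
  unfolding blk_def by simp_all

lemma pick_interval: "x < n \<Longrightarrow> pick {a..<a+n} x = a + x"
proof (induction x)
  case 0
  then show ?case by (simp, intro Least_equality) auto
next
  case (Suc x)
  then have "pick {a..<a+n} x = a + x" by simp
  then show ?case using Suc.prems by (simp, intro Least_equality) auto
qed

lemma blk_submatrix:
  assumes A: "A \<in> carrier_mat K K" and "a + n \<le> K" "b + n \<le> K"
  shows "blk A a b n = submatrix A {a..<a+n} {b..<b+n}"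
proof -
  have c1: "{i. i < dim_row A \<and> i \<in> {a..<a+n}} = {a..<a+n}" using A assms by auto
  have c2: "{i. i < dim_col A \<and> i \<in> {b..<b+n}} = {b..<b+n}" using A assms by auto
  show ?thesis
    unfolding submatrix_def blk_def c1 c2
    by (rule eq_matI) (auto simp: pick_interval)
qed

lemma rank_blk:
  assumes A: "A \<in> carrier_mat K K" and "a + n \<le> K" "b + n \<le> K"
    and d: "det (blk A a b n) \<noteq> 0"
  shows "n \<le> vec_space.rank K A"
proof -
  have "card {j. j < K \<and> j \<in> {b..<b+n}} \<le> vec_space.rank K A"
    using vec_space.rank_gt_minor[OF A, of "{a..<a+n}" "{b..<b+n}"] d blk_submatrix[OF assms(1-3)]
    by simp
  moreover have "{j. j < K \<and> j \<in> {b..<b+n}} = {b..<b+n}" using assms by auto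
  ultimately show ?thesis by simp
qed

lemma mat_delete_blk_0:
  "mat_delete (blk A a b (Suc n)) 0 n = blk A (Suc a) b n"
  by (rule eq_matI) (auto simp: mat_delete_def)

lemma mat_delete_blk_n:
  "mat_delete (blk A a b (Suc n)) n 0 = blk A a (Suc b) n"
  by (rule eq_matI) (auto simp: mat_delete_def)

lemma corner_det:
  fixes X Y :: "real mat"
  assumes X: "X \<in> carrier_mat (Suc n) (Suc n)" and Y: "Y \<in> carrier_mat (Suc n) (Suc n)"
    and ci: "ci < Suc n" and cj: "cj < Suc n"
    and eq: "\<And>x y. x < Suc n \<Longrightarrow> y < Suc n \<Longrightarrow> (x,y) \<noteq> (ci,cj) \<Longrightarrow> X $$ (x,y) = Y $$ (x,y)"
    and dd: "det X = det Y"
    and md: "det (mat_delete X ci cj) \<noteq> 0"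
  shows "X $$ (ci,cj) = Y $$ (ci,cj)"
proof -
  have del: "mat_delete X ci y = mat_delete Y ci y" for y
    using X Y by (intro eq_matI) (auto simp: mat_delete_def intro!: eq)
  then have cof: "cofactor X ci y = cofactor Y ci y" for y unfolding cofactor_def by simp
  have "0 = det X - det Y" using dd by simp
  also have "\<dots> = (\<Sum>y<Suc n. X $$ (ci,y) * cofactor X ci y) - (\<Sum>y<Suc n. Y $$ (ci,y) * cofactor X ci y)"
    using laplace_expansion_row[OF X ci] laplace_expansion_row[OF Y ci] cof by simp
  also have "\<dots> = (\<Sum>y<Suc n. (X $$ (ci,y) - Y $$ (ci,y)) * cofactor X ci y)"
    by (simp add: sum_subtractf left_diff_distrib)
  also have "\<dots> = (\<Sum>y<Suc n. if y = cj then (X $$ (ci,cj) - Y $$ (ci,cj)) * cofactor X ci cj else 0)"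
    by (rule sum.cong) (auto simp: eq ci)
  also have "\<dots> = (X $$ (ci,cj) - Y $$ (ci,cj)) * cofactor X ci cj" using cj by simp
  finally have "(X $$ (ci,cj) - Y $$ (ci,cj)) * cofactor X ci cj = 0" by simp
  moreover have "cofactor X ci cj \<noteq> 0" using md unfolding cofactor_def by simp
  ultimately show ?thesis by simp
qed

lemma rank_sum_rank1:
  fixes f g :: "nat \<Rightarrow> nat \<Rightarrow> real"
  shows "vec_space.rank K (mat K K (\<lambda>(j,l). \<Sum>k<q. f k j * g k l)) \<le> q"
proof (induction q)
  case 0
  have "mat K K (\<lambda>(j,l). \<Sum>k<0. f k j * g k l) = (0\<^sub>m K K :: real mat)" by (rule eq_matI) auto
  then show ?case using vec_space.rank_0I by (metis le_refl)
next
  case (Suc q)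
  have split: "mat K K (\<lambda>(j,l). \<Sum>k<Suc q. f k j * g k l) =
     mat K K (\<lambda>(j,l). \<Sum>k<q. f k j * g k l) + mat K K (\<lambda>(j,l). f q j * g q l)"
    by (rule eq_matI) auto
  have r1: "vec_space.rank K (mat K K (\<lambda>(j,l). f q j * g q l)) \<le> 1"
    by (rule vec_space.rank_le_1_product_entries[of _ K K "f q" "g q"]) auto
  have "vec_space.rank K (mat K K (\<lambda>(j,l). \<Sum>k<Suc q. f k j * g k l)) \<le>
      vec_space.rank K (mat K K (\<lambda>(j,l). \<Sum>k<q. f k j * g k l)) + vec_space.rank K (mat K K (\<lambda>(j,l). f q j * g q l))"
    unfolding split by (rule vec_space.rank_subadditive) auto
  then show ?case using Suc r1 by linarith
qed



lemma completion_unique: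
  fixes \<theta> R :: "real mat"
  assumes th: "\<theta> \<in> carrier_mat K K" and R: "R \<in> carrier_mat K K"
    and band: "\<And>j l. j < K \<Longrightarrow> l < K \<Longrightarrow> j < l + w \<Longrightarrow> l < j + w \<Longrightarrow> \<theta> $$ (j,l) = R $$ (j,l)"
    and w: "2*q \<le> w"
    and rth: "vec_space.rank K \<theta> \<le> q" and rR: "vec_space.rank K R \<le> q"
    and minors: "\<And>a b. a + q \<le> K \<Longrightarrow> b + q \<le> K \<Longrightarrow> det (blk R a b q) \<noteq> 0"
  shows "\<theta> = R"
proof -
  have key: "\<forall>j l. j < K \<longrightarrow> l < K \<longrightarrow> (j - l) + (l - j) = d \<longrightarrow> \<theta> $$ (j,l) = R $$ (j,l)" for d
  proof (induction d rule: less_induct)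
    case (less d)
    show ?case
    proof (intro allI impI)
      fix j l assume jl: "j < K" "l < K" "(j - l) + (l - j) = d"
      show "\<theta> $$ (j,l) = R $$ (j,l)"
      proof (cases "d < w")
        case True
        then have "j < l + w" "l < j + w" using jl by auto
        then show ?thesis using band jl by auto
      next
        case False
        hence dw: "w \<le> d" by simp
        show ?thesis
        proof (cases "j \<le> l")
          case True
          hence ld: "l = j + d" using jl by auto
          define b where "b = l - q"
          have bq: "j + q \<le> b" "b + q = l" using ld dw w b_def by auto
          let ?X = "blk \<theta> j b (Suc q)"
          let ?Y = "blk R j b (Suc q)"
          have ranges: "j + Suc q \<le> K" "b + Suc q \<le> K" using bq jl by auto
          have detX: "det ?X = 0" using rank_blk[OF th ranges] rth by force
          have detY: "det ?Y = 0" using rank_blk[OF R ranges] rR by force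
          have eq: "?X $$ (x,y) = ?Y $$ (x,y)" if "x < Suc q" "y < Suc q" "(x,y) \<noteq> (0,q)" for x y
          proof -
            have "(j + x - (b + y)) + (b + y - (j + x)) < d" using that bq ld by auto
            moreover have "j + x < K" "b + y < K" using that ranges by auto
            ultimately show ?thesis using less.IH that by simp
          qed
          have dl: "mat_delete ?X 0 q = blk R (Suc j) b q"
            unfolding mat_delete_blk_0
          proof (rule eq_matI)
            fix x y assume "x < dim_row (blk R (Suc j) b q)" "y < dim_col (blk R (Suc j) b q)"
            then have "x < q" "y < q" by auto
            then show "blk \<theta> (Suc j) b q $$ (x, y) = blk R (Suc j) b q $$ (x, y)"
              using eq[of "Suc x" y] by simp
          qed auto
          have md: "det (mat_delete ?X 0 q) \<noteq> 0"
            unfolding dl using minors ranges by simp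
          have "?X $$ (0,q) = ?Y $$ (0,q)"
            by (rule corner_det[OF blk_carrier blk_carrier _ _ eq]) (use detX detY md in auto)
          then show ?thesis using bq by simp
        next
          case False
          hence ld: "j = l + d" using jl by auto
          define a where "a = j - q"
          have aq: "l + q \<le> a" "a + q = j" using ld dw w a_def by auto
          let ?X = "blk \<theta> a l (Suc q)"
          let ?Y = "blk R a l (Suc q)"
          have ranges: "a + Suc q \<le> K" "l + Suc q \<le> K" using aq jl by auto
          have detX: "det ?X = 0" using rank_blk[OF th ranges] rth by force
          have detY: "det ?Y = 0" using rank_blk[OF R ranges] rR by force
          have eq: "?X $$ (x,y) = ?Y $$ (x,y)" if "x < Suc q" "y < Suc q" "(x,y) \<noteq> (q,0)" for x y
          proof -
            have "(a + x - (l + y)) + (l + y - (a + x)) < d" using that aq ld by auto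
            moreover have "a + x < K" "l + y < K" using that ranges by auto
            ultimately show ?thesis using less.IH that by simp
          qed
          have dl: "mat_delete ?X q 0 = blk R a (Suc l) q"
            unfolding mat_delete_blk_n
          proof (rule eq_matI)
            fix x y assume "x < dim_row (blk R a (Suc l) q)" "y < dim_col (blk R a (Suc l) q)"
            then have "x < q" "y < q" by auto
            then show "blk \<theta> a (Suc l) q $$ (x, y) = blk R a (Suc l) q $$ (x, y)"
              using eq[of x "Suc y"] by simp
          qed auto
          have md: "det (mat_delete ?X q 0) \<noteq> 0"
            unfolding dl using minors ranges by simp
          have "?X $$ (q,0) = ?Y $$ (q,0)"
            by (rule corner_det[OF blk_carrier blk_carrier _ _ eq]) (use detX detY md in auto)
          then show ?thesis using aq by simp
        qed
      qed
    qed
  qed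
  show ?thesis
    using th R key by (intro eq_matI) auto
qed



lemma low_rank_gap:
  fixes R :: "real mat"
  assumes R: "R \<in> carrier_mat K K" and qK: "q \<le> K"
    and dR: "det (blk R 0 0 q) \<noteq> 0"
  shows "\<exists>c>0. \<forall>\<theta>\<in>carrier_mat K K. vec_space.rank K \<theta> < q \<longrightarrow>
           c \<le> (\<Sum>x<q. \<Sum>y<q. (\<theta> $$ (x,y) - R $$ (x,y))\<^sup>2)"
proof (rule ccontr)
  define S where "S \<theta> = (\<Sum>x<q. \<Sum>y<q. (\<theta> $$ (x,y) - R $$ (x,y))\<^sup>2)" for \<theta>
  assume neg: "\<not> ?thesis"
  have "\<forall>n. \<exists>\<theta>. \<theta> \<in> carrier_mat K K \<and> vec_space.rank K \<theta> < q \<and> S \<theta> < 1 / (real n + 1)"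
  proof
    fix n :: nat
    have "1 / (real n + 1) > 0" by simp
    then show "\<exists>\<theta>. \<theta> \<in> carrier_mat K K \<and> vec_space.rank K \<theta> < q \<and> S \<theta> < 1 / (real n + 1)"
      using neg \<open>1 / (real n + 1) > 0\<close> unfolding S_def by (meson not_le)
  qed
  then obtain th where th: "\<And>n. th n \<in> carrier_mat K K" "\<And>n. vec_space.rank K (th n) < q"
     "\<And>n. S (th n) < 1 / (real n + 1)"
    by metis
  have Snn: "0 \<le> (\<theta> $$ (x,y) - R $$ (x,y))\<^sup>2" for \<theta> x y by simp
  have entry: "(\<lambda>n. th n $$ (x,y)) \<longlonglongrightarrow> R $$ (x,y)" if xy: "x < q" "y < q" for x y
  proof -
    have le: "(th n $$ (x,y) - R $$ (x,y))\<^sup>2 \<le> S (th n)" for n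
    proof -
      have "(th n $$ (x,y) - R $$ (x,y))\<^sup>2 \<le> (\<Sum>y'<q. (th n $$ (x,y') - R $$ (x,y'))\<^sup>2)"
        using xy by (intro member_le_sum) auto
      also have "\<dots> \<le> S (th n)" unfolding S_def
        using xy by (intro member_le_sum[where i=x and f="\<lambda>x. \<Sum>y'<q. (th n $$ (x,y') - R $$ (x,y'))\<^sup>2"])
          (auto intro: sum_nonneg)
      finally show ?thesis .
    qed
    have "(\<lambda>n. 1 / (real n + 1)) \<longlonglongrightarrow> 0"
      using LIMSEQ_inverse_real_of_nat by (simp add: inverse_eq_divide add.commute)
    then have sq: "(\<lambda>n. (th n $$ (x,y) - R $$ (x,y))\<^sup>2) \<longlonglongrightarrow> 0"
    proof (rule tendsto_sandwich[rotated 2, OF tendsto_const])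
      show "\<forall>\<^sub>F n in sequentially. 0 \<le> (th n $$ (x,y) - R $$ (x,y))\<^sup>2" by simp
      show "\<forall>\<^sub>F n in sequentially. (th n $$ (x,y) - R $$ (x,y))\<^sup>2 \<le> 1 / (real n + 1)"
        using le th(3) by (intro always_eventually allI) (meson less_imp_le order_trans)
    qed
    then have "(\<lambda>n. sqrt ((th n $$ (x,y) - R $$ (x,y))\<^sup>2)) \<longlonglongrightarrow> sqrt 0"
      by (rule tendsto_real_sqrt)
    then have "(\<lambda>n. \<bar>th n $$ (x,y) - R $$ (x,y)\<bar>) \<longlonglongrightarrow> 0" by simp
    then have "(\<lambda>n. th n $$ (x,y) - R $$ (x,y)) \<longlonglongrightarrow> 0" by (simp add: tendsto_rabs_zero_iff)
    then have "(\<lambda>n. (th n $$ (x,y) - R $$ (x,y)) + R $$ (x,y)) \<longlonglongrightarrow> 0 + R $$ (x,y)"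
      by (intro tendsto_add) auto
    then show ?thesis by simp
  qed
  have dblk: "det (blk A 0 0 q) = (\<Sum>p\<in>{p. p permutes {0..<q}}. signof p * (\<Prod>i = 0..<q. blk A 0 0 q $$ (i, p i)))" for A
    by (simp add: det_def)
  have detconv: "(\<lambda>n. det (blk (th n) 0 0 q)) \<longlonglongrightarrow> det (blk R 0 0 q)"
    unfolding dblk
  proof (intro tendsto_sum tendsto_mult tendsto_const tendsto_prod)
    fix p i assume p: "p \<in> {p. p permutes {0..<q}}" and i: "i \<in> {0..<q}"
    then have "p i < q" using permutes_in_image[of p "{0..<q}" i] by auto
    then show "(\<lambda>n. blk (th n) 0 0 q $$ (i, p i)) \<longlonglongrightarrow> blk R 0 0 q $$ (i, p i)"
      using entry[of i "p i"] i by simp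
  qed
  have "det (blk (th n) 0 0 q) = 0" for n
    using rank_blk[OF th(1), of 0 q 0] th(2)[of n] qK by force
  then have "(\<lambda>n. det (blk (th n) 0 0 q)) \<longlonglongrightarrow> 0" by simp
  then have "det (blk R 0 0 q) = 0" using detconv LIMSEQ_unique by blast
  then show False using dR by simp
qed



definition Phi :: "(nat \<Rightarrow> real \<Rightarrow> real) \<Rightarrow> nat \<Rightarrow> (nat \<Rightarrow> real) \<Rightarrow> nat \<Rightarrow> real mat" where
  "Phi \<phi> q t a = mat q q (\<lambda>(m,k). \<phi> k (t (a+m)))"

lemma Phi_carrier[simp]: "Phi \<phi> q t a \<in> carrier_mat q q" unfolding Phi_def by simp

lemma kernel_rank:
  fixes \<phi> :: "nat \<Rightarrow> real \<Rightarrow> real"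
  assumes mercer: "\<forall>s\<in>{0..1}. \<forall>t\<in>{0..1}. r s t = (\<Sum>j<q. lam j * \<phi> j s * \<phi> j t)"
    and box: "\<forall>j<K. t j \<in> {0..1}"
  shows "vec_space.rank K (kernel_mat r K t) \<le> q"
proof -
  have "kernel_mat r K t = mat K K (\<lambda>(j,l). \<Sum>k<q. (lam k * \<phi> k (t j)) * \<phi> k (t l))"
    unfolding kernel_mat_def using mercer box by (intro eq_matI) auto
  then show ?thesis using rank_sum_rank1[of K "\<lambda>k j. lam k * \<phi> k (t j)" "\<lambda>k l. \<phi> k (t l)" q] by simp
qed

lemma kernel_carrier[simp]: "kernel_mat r K t \<in> carrier_mat K K"
  unfolding kernel_mat_def by simp

definition Psi :: "(nat \<Rightarrow> real \<Rightarrow> real) \<Rightarrow> (nat \<Rightarrow> real) \<Rightarrow> nat \<Rightarrow> (nat \<Rightarrow> real) \<Rightarrow> nat \<Rightarrow> real mat" where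
  "Psi \<phi> lam q t b = mat q q (\<lambda>(m,k). lam k * \<phi> k (t (b+m)))"

definition Dg :: "(nat \<Rightarrow> real) \<Rightarrow> nat \<Rightarrow> real mat" where
  "Dg lam q = mat q q (\<lambda>(i,j). if i = j then lam i else 0)"

lemma kernel_blk:
  fixes \<phi> :: "nat \<Rightarrow> real \<Rightarrow> real"
  assumes mercer: "\<forall>s\<in>{0..1}. \<forall>t\<in>{0..1}. r s t = (\<Sum>j<q. lam j * \<phi> j s * \<phi> j t)"
    and box: "\<forall>j<K. t j \<in> {0..1}" and ab: "a + q \<le> K" "b + q \<le> K"
  shows "blk (kernel_mat r K t) a b q = Phi \<phi> q t a * transpose_mat (Psi \<phi> lam q t b)"
proof (rule eq_matI)
  fix x y assume "x < dim_row (Phi \<phi> q t a * transpose_mat (Psi \<phi> lam q t b))"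
    "y < dim_col (Phi \<phi> q t a * transpose_mat (Psi \<phi> lam q t b))"
  then have xy: "x < q" "y < q" by (auto simp: Phi_def Psi_def)
  then have in01: "t (a+x) \<in> {0..1}" "t (b+y) \<in> {0..1}" using box ab by auto
  have "blk (kernel_mat r K t) a b q $$ (x,y) = r (t (a+x)) (t (b+y))"
    using xy ab by (simp add: kernel_mat_def)
  also have "\<dots> = (\<Sum>k<q. lam k * \<phi> k (t (a+x)) * \<phi> k (t (b+y)))" using mercer in01 by blast
  also have "\<dots> = (Phi \<phi> q t a * transpose_mat (Psi \<phi> lam q t b)) $$ (x,y)"
    using xy by (simp add: Phi_def Psi_def scalar_prod_def lessThan_atLeast0 mult.commute mult.left_commute)
  finally show "blk (kernel_mat r K t) a b q $$ (x,y) = (Phi \<phi> q t a * transpose_mat (Psi \<phi> lam q t b)) $$ (x,y)" .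
qed (auto simp: Phi_def Psi_def)

lemma Psi_eq: "Psi \<phi> lam q t b = Phi \<phi> q t b * Dg lam q"
proof (rule eq_matI)
  fix x y assume "x < dim_row (Phi \<phi> q t b * Dg lam q)" "y < dim_col (Phi \<phi> q t b * Dg lam q)"
  then have xy: "x < q" "y < q" by (auto simp: Phi_def Dg_def)
  have "(Phi \<phi> q t b * Dg lam q) $$ (x,y) = (\<Sum>j\<in>{0..<q}. \<phi> j (t (b+x)) * (if j = y then lam j else 0))"
    using xy by (simp add: Phi_def Dg_def scalar_prod_def)
  also have "\<dots> = \<phi> y (t (b+x)) * lam y"
    using xy by (simp add: if_distrib cong: if_cong)
  finally show "Psi \<phi> lam q t b $$ (x,y) = (Phi \<phi> q t b * Dg lam q) $$ (x,y)"
    using xy by (simp add: Psi_def)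
qed (auto simp: Phi_def Psi_def Dg_def)

lemma det_Dg:
  assumes "\<forall>i<q. lam i \<noteq> 0"
  shows "det (Dg lam q) \<noteq> 0"
proof -
  have "upper_triangular (Dg lam q)" unfolding upper_triangular_def Dg_def by auto
  then have "det (Dg lam q) = prod_list (diag_mat (Dg lam q))"
    by (rule det_upper_triangular[of _ q]) (simp add: Dg_def)
  also have "\<dots> \<noteq> 0" using assms by (auto simp: diag_mat_def Dg_def prod_list_zero_iff)
  finally show ?thesis .
qed

lemma kernel_minor:
  fixes \<phi> :: "nat \<Rightarrow> real \<Rightarrow> real"
  assumes mercer: "\<forall>s\<in>{0..1}. \<forall>t\<in>{0..1}. r s t = (\<Sum>j<q. lam j * \<phi> j s * \<phi> j t)"
    and lam: "\<forall>j<q. lam j > 0"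
    and box: "\<forall>j<K. t j \<in> {0..1}" and ab: "a + q \<le> K" "b + q \<le> K"
    and da: "det (Phi \<phi> q t a) \<noteq> 0" and db: "det (Phi \<phi> q t b) \<noteq> 0"
  shows "det (blk (kernel_mat r K t) a b q) \<noteq> 0"
proof -
  have Psc: "Psi \<phi> lam q t b \<in> carrier_mat q q" by (simp add: Psi_def)
  have Dc: "Dg lam q \<in> carrier_mat q q" by (simp add: Dg_def)
  have "det (blk (kernel_mat r K t) a b q) = det (Phi \<phi> q t a) * det (transpose_mat (Psi \<phi> lam q t b))"
    unfolding kernel_blk[OF mercer box ab]
    by (rule det_mult[OF Phi_carrier]) (use Psc in simp)
  also have "det (transpose_mat (Psi \<phi> lam q t b)) = det (Psi \<phi> lam q t b)"
    by (rule det_transpose[OF Psc])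
  also have "det (Psi \<phi> lam q t b) = det (Phi \<phi> q t b) * det (Dg lam q)"
    unfolding Psi_eq by (rule det_mult[OF Phi_carrier Dc])
  moreover have "\<forall>i<q. lam i \<noteq> 0" using lam by (simp add: less_imp_neq[symmetric])
  then have "det (Dg lam q) \<noteq> 0" by (rule det_Dg)
  ultimately show ?thesis using da db by simp
qed



lemma deterministic:
  fixes R :: "real mat" and K q w :: nat and \<delta> :: real
  assumes R: "R \<in> carrier_mat K K"
    and rR: "vec_space.rank K R \<le> q"
    and minors: "\<And>a b. a + q \<le> K \<Longrightarrow> b + q \<le> K \<Longrightarrow> det (blk R a b q) \<noteq> 0"
    and qK: "q \<le> K" and Kpos: "0 < K"
    and w: "2*q \<le> w"
    and mask: "\<And>j l. band_mask K \<delta> j l = (if j < l + w \<and> l < j + w then 1 else 0)"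
  shows "(\<forall>\<theta> \<in> carrier_mat K K.
               masked_frob_sq K \<delta> R \<theta> = 0 \<longrightarrow> \<theta> \<noteq> R \<longrightarrow> mrank K R < mrank K \<theta>)
            \<and> (\<exists>\<tau>0 > 0. \<forall>\<tau>. 0 < \<tau> \<and> \<tau> < \<tau>0 \<longrightarrow>
               (\<forall>\<theta> \<in> carrier_mat K K. \<theta> \<noteq> R \<longrightarrow>
                  masked_frob_sq K \<delta> R R / (real K)\<^sup>2 + \<tau> * real (mrank K R)
                  < masked_frob_sq K \<delta> R \<theta> / (real K)\<^sup>2 + \<tau> * real (mrank K \<theta>)))"
proof -
  have P1: "mrank K R < mrank K \<theta>"
    if th: "\<theta> \<in> carrier_mat K K" and m0: "masked_frob_sq K \<delta> R \<theta> = 0" and ne: "\<theta> \<noteq> R" for \<theta>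
  proof (rule ccontr)
    assume "\<not> ?thesis"
    then have rth: "vec_space.rank K \<theta> \<le> q" using rR unfolding mrank_def by linarith
    have zero: "band_mask K \<delta> j l * (R $$ (j,l) - \<theta> $$ (j,l)) = 0" if jl: "j<K" "l<K" for j l
    proof -
      have s: "(\<Sum>j<K. \<Sum>l<K. (band_mask K \<delta> j l * (R $$ (j,l) - \<theta> $$ (j,l)))\<^sup>2) = 0"
        using m0 unfolding masked_frob_sq_def .
      have "\<forall>j\<in>{..<K}. (\<Sum>l<K. (band_mask K \<delta> j l * (R $$ (j,l) - \<theta> $$ (j,l)))\<^sup>2) = 0"
        using s by (subst (asm) sum_nonneg_eq_0_iff) (auto intro: sum_nonneg)
      then have "(\<Sum>l<K. (band_mask K \<delta> j l * (R $$ (j,l) - \<theta> $$ (j,l)))\<^sup>2) = 0" using jl by auto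
      then have "(band_mask K \<delta> j l * (R $$ (j,l) - \<theta> $$ (j,l)))\<^sup>2 = 0"
        using jl by (subst (asm) sum_nonneg_eq_0_iff) auto
      then show ?thesis by simp
    qed
    have "\<theta> = R"
    proof (rule completion_unique[OF th R _ w rth rR minors])
      fix j l assume "j<K" "l<K" "j < l + w" "l < j + w"
      then show "\<theta> $$ (j,l) = R $$ (j,l)" using zero[of j l] mask[of j l] by simp
    qed auto
    then show False using ne by simp
  qed
  obtain c where c: "c > 0" "\<And>\<theta>. \<theta>\<in>carrier_mat K K \<Longrightarrow> vec_space.rank K \<theta> < q \<Longrightarrow>
       c \<le> (\<Sum>x<q. \<Sum>y<q. (\<theta> $$ (x,y) - R $$ (x,y))\<^sup>2)"
    using low_rank_gap[OF R qK minors[of 0 0]] qK by auto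
  have gap: "c \<le> masked_frob_sq K \<delta> R \<theta>"
    if th: "\<theta>\<in>carrier_mat K K" "vec_space.rank K \<theta> < q" for \<theta>
  proof -
    define f where "f j l = (band_mask K \<delta> j l * (R $$ (j,l) - \<theta> $$ (j,l)))\<^sup>2" for j l
    have "c \<le> (\<Sum>x<q. \<Sum>y<q. (\<theta> $$ (x,y) - R $$ (x,y))\<^sup>2)" using c(2) th by auto
    also have "\<dots> = (\<Sum>x<q. \<Sum>y<q. f x y)"
    proof (intro sum.cong refl)
      fix x y assume "x \<in> {..<q}" "y\<in>{..<q}"
      then have "band_mask K \<delta> x y = 1" using mask[of x y] w by auto
      then show "(\<theta> $$ (x,y) - R $$ (x,y))\<^sup>2 = f x y" unfolding f_def by (simp add: power2_commute)
    qed
    also have "\<dots> \<le> (\<Sum>x<K. \<Sum>y<q. f x y)"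
      by (rule sum_mono2) (auto simp: qK f_def intro: sum_nonneg)
    also have "\<dots> \<le> (\<Sum>x<K. \<Sum>y<K. f x y)"
      by (intro sum_mono sum_mono2) (auto simp: f_def qK)
    finally show ?thesis unfolding masked_frob_sq_def f_def .
  qed
  define \<tau>0 where "\<tau>0 = c / ((real K)\<^sup>2 * (real q + 1))"
  have \<tau>0: "\<tau>0 > 0" using c Kpos unfolding \<tau>0_def by simp
  have mRR: "masked_frob_sq K \<delta> R R = 0" unfolding masked_frob_sq_def by simp
  have nn: "0 \<le> masked_frob_sq K \<delta> R \<theta>" for \<theta> unfolding masked_frob_sq_def by (intro sum_nonneg) auto
  have Kp: "(real K)\<^sup>2 > 0" using Kpos by simp
  have P2: "masked_frob_sq K \<delta> R R / (real K)\<^sup>2 + \<tau> * real (mrank K R)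
                  < masked_frob_sq K \<delta> R \<theta> / (real K)\<^sup>2 + \<tau> * real (mrank K \<theta>)"
    if \<tau>: "0 < \<tau>" "\<tau> < \<tau>0" and th: "\<theta>\<in>carrier_mat K K" "\<theta> \<noteq> R" for \<tau> \<theta>
  proof (cases "mrank K \<theta> < mrank K R")
    case True
    then have "vec_space.rank K \<theta> < q" using rR unfolding mrank_def by linarith
    then have m: "c \<le> masked_frob_sq K \<delta> R \<theta>" using gap th by auto
    have "\<tau> * real (mrank K R) \<le> \<tau> * real q" using rR \<tau> unfolding mrank_def by simp
    also have "\<tau> * real q \<le> \<tau>0 * real q" using \<tau> by (intro mult_right_mono) auto
    also have "\<tau>0 * real q < \<tau>0 * (real q + 1)" using \<tau>0 by simp
    also have "\<tau>0 * (real q + 1) = c / (real K)\<^sup>2"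
    proof -
      have "real q + 1 \<noteq> 0" by simp
      then show ?thesis unfolding \<tau>0_def by (simp add: divide_simps)
    qed
    also have "c / (real K)\<^sup>2 \<le> masked_frob_sq K \<delta> R \<theta> / (real K)\<^sup>2"
      using m Kp by (intro divide_right_mono) auto
    finally have "\<tau> * real (mrank K R) < masked_frob_sq K \<delta> R \<theta> / (real K)\<^sup>2" .
    moreover have "0 \<le> \<tau> * real (mrank K \<theta>)" using \<tau> by simp
    ultimately show ?thesis using mRR by simp
  next
    case False
    show ?thesis
    proof (cases "masked_frob_sq K \<delta> R \<theta> = 0")
      case True
      then have "mrank K R < mrank K \<theta>" using P1 th by auto
      then have "\<tau> * real (mrank K R) < \<tau> * real (mrank K \<theta>)" using \<tau> by simp
      then show ?thesis using mRR True by simp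
    next
      case mF: False
      then have "0 < masked_frob_sq K \<delta> R \<theta> / (real K)\<^sup>2" using nn[of \<theta>] Kp by simp
      moreover have "\<tau> * real (mrank K R) \<le> \<tau> * real (mrank K \<theta>)" using \<tau> False by simp
      ultimately show ?thesis using mRR by simp
    qed
  qed
  show ?thesis using P1 P2 \<tau>0 by blast
qed



lemma ra_isCont:
  assumes "real_analytic_at f x" shows "isCont f x"
proof -
  obtain a e where e: "e>0" and a: "\<And>y. \<bar>y-x\<bar> < e \<Longrightarrow> (\<lambda>n. a n * (y-x)^n) sums f y"
    using assms(1) unfolding real_analytic_at_def by blast
  define g where "g y = (\<Sum>n. a n * (y - x)^n)" for y
  have summ: "summable (\<lambda>n. a n * (e/2)^n)" using a[of "x + e/2"] e by (auto simp: sums_iff)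
  have "isCont (\<lambda>y. \<Sum>n. a n * (y - x)^n) x"
    by (rule isCont_powser'[OF _ summ]) (use e in \<open>auto intro!: continuous_intros\<close>)
  then have cg: "isCont g x" unfolding g_def .
  have "eventually (\<lambda>y. f y = g y) (nhds x)"
    unfolding eventually_nhds_metric
  proof (intro exI[of _ e] conjI allI impI)
    fix y assume "dist y x < e"
    then have "\<bar>y - x\<bar> < e" by (simp add: dist_real_def)
    then show "f y = g y" using a[of y] unfolding g_def by (simp add: sums_iff)
  qed (use e in simp)
  then show ?thesis using cg isCont_cong by blast
qed

lemma psi_meas:
  fixes f :: "real \<Rightarrow> real"
  assumes ana: "\<forall>x\<in>{0<..<1}. real_analytic_at f x"
  shows "(\<lambda>y. if y \<in> {0..1} then f y else 0) \<in> borel_measurable borel"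
proof -
  have c: "continuous_on {0<..<1} f"
    using ana ra_isCont by (intro continuous_at_imp_continuous_on) blast
  have eq: "(\<lambda>y. if y \<in> {0..1} then f y else 0) =
     (\<lambda>y. indicator {0<..<1} y *\<^sub>R f y + indicator {0} y * f 0 + indicator {1} y * f 1)"
    by (rule ext) (auto simp: indicator_def)
  show ?thesis unfolding eq
    using borel_measurable_continuous_on_indicator[OF _ c] by measurable
qed

lemma det_Phi_eq:
  "det (Phi \<psi> m t a) = (\<Sum>p\<in>{p. p permutes {0..<m}}. signof p * (\<Prod>i=0..<m. \<psi> (p i) (t (a+i))))"
proof -
  have "det (Phi \<psi> m t a) = (\<Sum>p\<in>{p. p permutes {0..<m}}. signof p * (\<Prod>i=0..<m. Phi \<psi> m t a $$ (i, p i)))"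
    by (simp add: det_def Phi_def)
  also have "\<dots> = (\<Sum>p\<in>{p. p permutes {0..<m}}. signof p * (\<Prod>i=0..<m. \<psi> (p i) (t (a+i))))"
  proof (intro sum.cong refl arg_cong2[where f="(*)"] prod.cong)
    fix p i assume "p \<in> {p. p permutes {0..<m}}" "i \<in> {0..<m}"
    then have "p i < m" using permutes_in_image[of p "{0..<m}" i] by auto
    then show "Phi \<psi> m t a $$ (i, p i) = \<psi> (p i) (t (a+i))" using \<open>i \<in> {0..<m}\<close> by (simp add: Phi_def)
  qed
  finally show ?thesis .
qed

lemma det_Phi_meas:
  assumes meas: "\<And>k. \<psi> k \<in> borel_measurable borel" and am: "a + m \<le> K"
  shows "(\<lambda>t. det (Phi \<psi> m t a)) \<in> borel_measurable (PiM {..<K} (\<lambda>_. lborel))"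
  unfolding det_Phi_eq
proof (intro borel_measurable_sum borel_measurable_times borel_measurable_const borel_measurable_prod)
  fix p i assume "i \<in> {0..<m}"
  then have "a + i \<in> {..<K}" using am by auto
  then have "(\<lambda>t. t (a+i)) \<in> measurable (PiM {..<K} (\<lambda>_. lborel)) lborel"
    using measurable_component_singleton by fastforce
  then show "(\<lambda>t. \<psi> (p i) (t (a+i))) \<in> borel_measurable (PiM {..<K} (\<lambda>_. lborel))"
  proof -
    note 1 = \<open>(\<lambda>t. t (a+i)) \<in> measurable (PiM {..<K} (\<lambda>_. lborel)) lborel\<close>
    have 2: "\<psi> (p i) \<in> measurable lborel borel" using meas by simp
    show ?thesis using measurable_compose[OF 1 2] .
  qed
qed

lemma det_Phi_Suc:
  "det (Phi \<psi> (Suc m) t a) = (\<Sum>k<Suc m. \<psi> k (t (a+m)) * cofactor (Phi \<psi> (Suc m) t a) m k)"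
proof -
  have "det (Phi \<psi> (Suc m) t a) = (\<Sum>k<Suc m. Phi \<psi> (Suc m) t a $$ (m,k) * cofactor (Phi \<psi> (Suc m) t a) m k)"
    by (rule laplace_expansion_row[OF Phi_carrier]) simp
  also have "\<dots> = (\<Sum>k<Suc m. \<psi> k (t (a+m)) * cofactor (Phi \<psi> (Suc m) t a) m k)"
  proof (intro sum.cong refl arg_cong2[where f="(*)"])
    fix k assume "k \<in> {..<Suc m}"
    then show "Phi \<psi> (Suc m) t a $$ (m,k) = \<psi> k (t (a+m))" unfolding Phi_def by simp
  qed
  finally show ?thesis .
qed

lemma cof_indep:
  assumes "\<forall>x<m. t' (a+x) = t (a+x)"
  shows "cofactor (Phi \<psi> (Suc m) t' a) m k = cofactor (Phi \<psi> (Suc m) t a) m k"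
proof -
  have "mat_delete (Phi \<psi> (Suc m) t' a) m k = mat_delete (Phi \<psi> (Suc m) t a) m k"
    using assms by (intro eq_matI) (auto simp: mat_delete_def Phi_def)
  then show ?thesis unfolding cofactor_def by simp
qed

lemma cof_mm:
  "cofactor (Phi \<psi> (Suc m) t a) m m = det (Phi \<psi> m t a)"
proof -
  have "mat_delete (Phi \<psi> (Suc m) t a) m m = Phi \<psi> m t a"
    by (intro eq_matI) (auto simp: mat_delete_def Phi_def)
  moreover have "(-1::real)^(m+m) = 1" by (simp add: mult_2[symmetric])
  ultimately show ?thesis unfolding cofactor_def by simp
qed



lemma step_null:
  fixes \<psi> \<phi> :: "nat \<Rightarrow> real \<Rightarrow> real"
  assumes psi: "\<And>k y. k < q \<Longrightarrow> y \<in> {0..1} \<Longrightarrow> \<psi> k y = \<phi> k y"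
    and meas: "\<And>k. \<psi> k \<in> borel_measurable borel"
    and orth: "\<forall>i<q. \<forall>j<q. ((\<lambda>t. \<phi> i t * \<phi> j t) has_integral (if i = j then 1 else 0)) {0..1}"
    and ana: "\<forall>j<q. \<forall>x\<in>{0<..<1}. real_analytic_at (\<phi> j) x"
    and m: "m < q" and aK: "a + q \<le> K"
  shows "AE t in PiM {..<K} (\<lambda>_. lborel). (\<forall>j<K. t j \<in> {0..1}) \<longrightarrow>
            det (Phi \<psi> m t a) \<noteq> 0 \<longrightarrow> det (Phi \<psi> (Suc m) t a) \<noteq> 0"
proof (rule AE_I')
  let ?M = "PiM {..<K} (\<lambda>_. lborel :: real measure)"
  define N where "N = {t \<in> space ?M. (\<forall>j<K. t j \<in> {0..1}) \<and> det (Phi \<psi> m t a) \<noteq> 0 \<and> det (Phi \<psi> (Suc m) t a) = 0}"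
  show "{t \<in> space ?M. \<not> ((\<forall>j<K. t j \<in> {0..1}) \<longrightarrow>
            det (Phi \<psi> m t a) \<noteq> 0 \<longrightarrow> det (Phi \<psi> (Suc m) t a) \<noteq> 0)} \<subseteq> N"
    unfolding N_def by auto
  have [measurable]: "(\<lambda>t. det (Phi \<psi> m t a)) \<in> borel_measurable ?M"
    using det_Phi_meas[OF meas] m aK by simp
  have [measurable]: "(\<lambda>t. det (Phi \<psi> (Suc m) t a)) \<in> borel_measurable ?M"
    using det_Phi_meas[OF meas] m aK by simp
  have box: "{t \<in> space ?M. \<forall>j<K. t j \<in> {0..1}} \<in> sets ?M"
  proof -
    have "{t \<in> space ?M. \<forall>j<K. t j \<in> {0..1}} = space ?M \<inter> (\<Inter>j<K. {t \<in> space ?M. t j \<in> {0..1}})"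
      by auto
    also have "\<dots> \<in> sets ?M"
    proof (intro sets.Int sets.top sets.finite_INT)
      fix j assume "j \<in> {..<K}"
      then have "(\<lambda>t. t j) \<in> measurable ?M lborel" using measurable_component_singleton by fastforce
      note mc = this
      have "(\<lambda>t. t j) -` {0..1::real} \<inter> space ?M \<in> sets ?M"
        using measurable_sets[OF mc, of "{0..1::real}"] by simp
      moreover have eqs: "{t \<in> space ?M. t j \<in> {0..1::real}} = (\<lambda>t. t j) -` {0..1} \<inter> space ?M" by auto
      ultimately show "{t \<in> space ?M. t j \<in> {0..1}} \<in> sets ?M" by (simp only: eqs)
    qed (use m aK in \<open>auto simp: lessThan_empty_iff\<close>)
    finally show ?thesis .
  qed
  have Nsets: "N \<in> sets ?M"
  proof -
    have "N = {t \<in> space ?M. \<forall>j<K. t j \<in> {0..1}} \<inter> {t \<in> space ?M. det (Phi \<psi> m t a) \<noteq> 0 \<and> det (Phi \<psi> (Suc m) t a) = 0}"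
      unfolding N_def by auto
    also have "\<dots> \<in> sets ?M" using box by measurable
    finally show ?thesis .
  qed
  define i where "i = a + m"
  have iK: "i < K" using m aK i_def by simp
  interpret ps: product_sigma_finite "\<lambda>_::nat. lborel" by standard
  have ins: "{..<K} = insert i ({..<K} - {i})" using iK by auto
  have MM: "?M = PiM (insert i ({..<K} - {i})) (\<lambda>_. lborel)" using ins by simp
  have inner: "(\<integral>\<^sup>+ y. indicator N (x(i := y)) \<partial>lborel) = 0" for x
  proof -
    define t0 where "t0 = x(i := 0)"
    have same_m: "Phi \<psi> m (x(i:=y)) a = Phi \<psi> m t0 a" for y
      unfolding t0_def Phi_def i_def by (intro eq_matI) auto
    show ?thesis
    proof (cases "det (Phi \<psi> m t0 a) = 0")
      case True
      then have "indicator N (x(i := y)) = (0::ennreal)" for y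
        unfolding N_def using same_m[of y] by (auto simp: indicator_def)
      then show ?thesis by simp
    next
      case False
      define c where "c k = cofactor (Phi \<psi> (Suc m) t0 a) m k" for k
      have cm: "c m \<noteq> 0" unfolding c_def cof_mm using False .
      have expand: "det (Phi \<psi> (Suc m) (x(i:=y)) a) = (\<Sum>k\<le>m. c k * \<phi> k y)" if y01: "y \<in> {0..1}" for y
      proof -
        have "det (Phi \<psi> (Suc m) (x(i:=y)) a) = (\<Sum>k<Suc m. \<psi> k ((x(i:=y)) (a+m)) * cofactor (Phi \<psi> (Suc m) (x(i:=y)) a) m k)"
          by (rule det_Phi_Suc)
        also have "\<dots> = (\<Sum>k<Suc m. \<phi> k y * c k)"
        proof (intro sum.cong refl arg_cong2[where f="(*)"])
          fix k assume kk: "k \<in> {..<Suc m}"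
          then have "k < q" using m by simp
          then show "\<psi> k ((x(i:=y)) (a+m)) = \<phi> k y" using psi[OF _ y01] i_def by simp
          show "cofactor (Phi \<psi> (Suc m) (x(i:=y)) a) m k = c k"
            unfolding c_def t0_def by (rule cof_indep) (auto simp: i_def)
        qed
        also have "\<dots> = (\<Sum>k\<le>m. c k * \<phi> k y)"
          by (simp add: lessThan_Suc_atMost mult.commute)
        finally show ?thesis .
      qed
      define Z where "Z = {y\<in>{0..1::real}. (\<Sum>k\<le>m. c k * \<phi> k y) = 0}"
      have anaf: "\<forall>y\<in>{0<..<1}. real_analytic_at (\<lambda>y. \<Sum>k\<le>m. c k * \<phi> k y) y"
        using ana m by (auto intro!: ra_sum ra_cmult)
      have "countable Z" unfolding Z_def
        by (rule ra_zeros_countable[OF anaf lincomb_nonzero[where c=c, OF orth m cm]])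
      then have Znull: "Z \<in> null_sets lborel" by (rule countable_imp_null_set_lborel)
      have "(\<integral>\<^sup>+ y. indicator N (x(i := y)) \<partial>lborel) \<le> (\<integral>\<^sup>+ y. indicator Z y \<partial>lborel)"
      proof (rule nn_integral_mono)
        fix y
        show "indicator N (x(i := y)) \<le> (indicator Z y :: ennreal)"
        proof (cases "x(i := y) \<in> N")
          case True
          then have y01: "y \<in> {0..1}" and d0: "det (Phi \<psi> (Suc m) (x(i:=y)) a) = 0"
            unfolding N_def using iK by (auto dest!: spec[of _ i])
          then have "y \<in> Z" unfolding Z_def using expand[OF y01] by simp
          then show ?thesis using True by simp
        qed simp
      qed
      also have "\<dots> = emeasure lborel Z" by (rule nn_integral_indicator[OF null_setsD2[OF Znull]])
      also have "\<dots> = 0" by (rule null_setsD1[OF Znull])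
      finally show ?thesis by simp
    qed
  qed
  have "emeasure ?M N = (\<integral>\<^sup>+ t. indicator N t \<partial>?M)" using Nsets by simp
  also have "\<dots> = (\<integral>\<^sup>+ x. (\<integral>\<^sup>+ y. indicator N (x(i := y)) \<partial>lborel) \<partial>PiM ({..<K} - {i}) (\<lambda>_. lborel))"
    unfolding MM
    by (rule ps.product_nn_integral_insert) (use Nsets MM in auto)
  also have "\<dots> = 0" unfolding inner by simp
  finally show "N \<in> null_sets ?M" using Nsets by (simp add: null_sets_def)
qed

lemma generic_det:
  fixes \<psi> \<phi> :: "nat \<Rightarrow> real \<Rightarrow> real"
  assumes psi: "\<And>k y. k < q \<Longrightarrow> y \<in> {0..1} \<Longrightarrow> \<psi> k y = \<phi> k y"
    and meas: "\<And>k. \<psi> k \<in> borel_measurable borel"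
    and orth: "\<forall>i<q. \<forall>j<q. ((\<lambda>t. \<phi> i t * \<phi> j t) has_integral (if i = j then 1 else 0)) {0..1}"
    and ana: "\<forall>j<q. \<forall>x\<in>{0<..<1}. real_analytic_at (\<phi> j) x"
    and aK: "a + q \<le> K"
  shows "m \<le> q \<Longrightarrow> AE t in PiM {..<K} (\<lambda>_. lborel). (\<forall>j<K. t j \<in> {0..1}) \<longrightarrow> det (Phi \<psi> m t a) \<noteq> 0"
proof (induction m)
  case 0
  have "Phi \<psi> 0 t a = 1\<^sub>m 0" for t by (rule eq_matI) (auto simp: Phi_def)
  then show ?case by simp
next
  case (Suc m)
  then have IH: "AE t in PiM {..<K} (\<lambda>_. lborel). (\<forall>j<K. t j \<in> {0..1}) \<longrightarrow> det (Phi \<psi> m t a) \<noteq> 0"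
    by simp
  have st: "AE t in PiM {..<K} (\<lambda>_. lborel). (\<forall>j<K. t j \<in> {0..1}) \<longrightarrow>
            det (Phi \<psi> m t a) \<noteq> 0 \<longrightarrow> det (Phi \<psi> (Suc m) t a) \<noteq> 0"
    using step_null[OF psi meas orth ana _ aK] Suc.prems by simp
  from IH st show ?case by eventually_elim auto
qed



theorem proposition2:
  fixes q K :: nat and lam :: "nat \<Rightarrow> real" and \<phi> :: "nat \<Rightarrow> real \<Rightarrow> real"
    and r :: "real \<Rightarrow> real \<Rightarrow> real" and \<delta> :: real
  assumes mercer: "\<forall>s\<in>{0..1}. \<forall>t\<in>{0..1}. r s t = (\<Sum>j<q. lam j * \<phi> j s * \<phi> j t)"
    and lam_pos: "\<forall>j<q. lam j > 0"
    and orthonormal: "\<forall>i<q. \<forall>j<q.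
           ((\<lambda>t. \<phi> i t * \<phi> j t) has_integral (if i = j then 1 else 0)) {0..1}"
    and analytic: "\<forall>j<q. \<forall>x\<in>{0<..<1}. real_analytic_at (\<phi> j) x"
    and delta: "0 < \<delta>" "\<delta> < 1"
    and K_large: "real K > (2 * real q + 1) / \<delta>"
  shows "AE t in PiM {..<K} (\<lambda>_. lborel).
           t \<in> grid_set K \<longrightarrow>
           ((\<forall>\<theta> \<in> carrier_mat K K.
               masked_frob_sq K \<delta> (kernel_mat r K t) \<theta> = 0 \<longrightarrow> \<theta> \<noteq> kernel_mat r K t \<longrightarrow>
               mrank K (kernel_mat r K t) < mrank K \<theta>)
            \<and>
            (\<exists>\<tau>0 > 0. \<forall>\<tau>. 0 < \<tau> \<and> \<tau> < \<tau>0 \<longrightarrow>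
               (\<forall>\<theta> \<in> carrier_mat K K. \<theta> \<noteq> kernel_mat r K t \<longrightarrow>
                  masked_frob_sq K \<delta> (kernel_mat r K t) (kernel_mat r K t) / (real K)\<^sup>2
                    + \<tau> * real (mrank K (kernel_mat r K t))
                  < masked_frob_sq K \<delta> (kernel_mat r K t) \<theta> / (real K)\<^sup>2
                    + \<tau> * real (mrank K \<theta>))))"
proof -
  define \<psi> where "\<psi> k y = (if k < q \<and> y \<in> {0..1} then \<phi> k y else 0)" for k y
  have psi: "\<And>k y. k < q \<Longrightarrow> y \<in> {0..1} \<Longrightarrow> \<psi> k y = \<phi> k y" by (simp add: \<psi>_def)
  have meas: "\<psi> k \<in> borel_measurable borel" for k
  proof (cases "k < q")
    case True
    then have "\<psi> k = (\<lambda>y. if y \<in> {0..1} then \<phi> k y else 0)" by (auto simp: \<psi>_def)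
    then show ?thesis using psi_meas[of "\<phi> k"] analytic True by simp
  next
    case False
    then have "\<psi> k = (\<lambda>y. 0)" by (auto simp: \<psi>_def)
    then show ?thesis by simp
  qed
  have Kd: "real K * \<delta> > 2 * real q + 1" using K_large delta by (simp add: pos_divide_less_eq)
  have "(2 * real q + 1) / \<delta> \<ge> 2 * real q + 1" using delta by (simp add: le_divide_eq)
  then have Kq: "real K > 2 * real q + 1" using K_large by linarith
  then have qK: "q \<le> K" and Kpos: "0 < K" by auto
  define W where "W = \<lfloor>real K * \<delta>\<rfloor> - 1"
  have "2 * int q + 1 \<le> \<lfloor>real K * \<delta>\<rfloor>" using Kd by (simp add: le_floor_iff)
  then have W2: "2 * int q \<le> W" unfolding W_def by simp
  define w where "w = nat W"
  have Ww: "W = int w" using W2 unfolding w_def by simp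
  have w: "2 * q \<le> w" using W2 Ww by simp
  have mask: "band_mask K \<delta> j l = (if j < l + w \<and> l < j + w then 1 else 0)" for j l
  proof -
    have "(\<bar>int j - int l\<bar> < \<lfloor>real K * \<delta>\<rfloor> - 1) = (j < l + w \<and> l < j + w)"
      using Ww unfolding W_def by auto
    then show ?thesis unfolding band_mask_def by simp
  qed
  have AEgen: "AE t in PiM {..<K} (\<lambda>_. lborel). \<forall>a\<in>{a. a + q \<le> K}.
       (\<forall>j<K. t j \<in> {0..1}) \<longrightarrow> det (Phi \<psi> q t a) \<noteq> 0"
  proof (rule AE_finite_allI)
    show "finite {a. a + q \<le> K}" by (rule finite_subset[of _ "{..K}"]) auto
    fix a assume "a \<in> {a. a + q \<le> K}"
    then have aK: "a + q \<le> K" by simp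
    show "AE t in PiM {..<K} (\<lambda>_. lborel). (\<forall>j<K. t j \<in> {0..1}) \<longrightarrow> det (Phi \<psi> q t a) \<noteq> 0"
      using generic_det[OF psi meas orthonormal analytic aK, of q] by simp
  qed
  show ?thesis
    using AEgen
  proof (rule eventually_mono, intro impI)
    fix t
    assume good: "\<forall>a\<in>{a. a + q \<le> K}. (\<forall>j<K. t j \<in> {0..1}) \<longrightarrow> det (Phi \<psi> q t a) \<noteq> 0"
      and grid: "t \<in> grid_set K"
    have box: "\<forall>j<K. t j \<in> {0..1}"
    proof (intro allI impI)
      fix j assume j: "j < K"
      then have "t j \<in> {real j / real K .. (real j + 1) / real K}" using grid unfolding grid_set_def by blast
      moreover have "(real j + 1) / real K \<le> 1" using j Kpos by (simp add: divide_le_eq)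
      moreover have "0 \<le> real j / real K" by simp
      ultimately show "t j \<in> {0..1}" unfolding atLeastAtMost_iff by linarith
    qed
    have PhiEq: "Phi \<psi> q t a = Phi \<phi> q t a" if "a + q \<le> K" for a
      using that box psi unfolding Phi_def by (intro eq_matI) auto
    have detPhi: "det (Phi \<phi> q t a) \<noteq> 0" if "a + q \<le> K" for a
      using good box PhiEq[OF that] that by auto
    show "(\<forall>\<theta> \<in> carrier_mat K K.
               masked_frob_sq K \<delta> (kernel_mat r K t) \<theta> = 0 \<longrightarrow> \<theta> \<noteq> kernel_mat r K t \<longrightarrow>
               mrank K (kernel_mat r K t) < mrank K \<theta>)
            \<and>
            (\<exists>\<tau>0 > 0. \<forall>\<tau>. 0 < \<tau> \<and> \<tau> < \<tau>0 \<longrightarrow>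
               (\<forall>\<theta> \<in> carrier_mat K K. \<theta> \<noteq> kernel_mat r K t \<longrightarrow>
                  masked_frob_sq K \<delta> (kernel_mat r K t) (kernel_mat r K t) / (real K)\<^sup>2
                    + \<tau> * real (mrank K (kernel_mat r K t))
                  < masked_frob_sq K \<delta> (kernel_mat r K t) \<theta> / (real K)\<^sup>2
                    + \<tau> * real (mrank K \<theta>)))"
    proof (rule deterministic[OF kernel_carrier kernel_rank[OF mercer box] _ qK Kpos w mask])
      fix a b assume "a + q \<le> K" "b + q \<le> K"
      then show "det (blk (kernel_mat r K t) a b q) \<noteq> 0"
        using kernel_minor[OF mercer lam_pos box _ _ detPhi detPhi] by blast
    qed
  qed
qed


end
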